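(* For every $n\ge 1$, the map $\nu:S_n\to\mathcal{D}_n\times\mathcal{D}_n$, $\nu(\sigma)=(\lambda(\sigma),\mu(\sigma))$, is injective when restricted to the set $S_n(1234)$ of permutations of $[n]$ avoiding the pattern $1234$.
   Context: A permutation $\sigma\in S_n$ avoids $1234$ if it has no subsequence $\sigma(i_1)<\sigma(i_2)<\sigma(i_3)<\sigma(i_4)$ with $i_1<i_2<i_3<i_4$. $\mathcal{D}_n$ denotes the set of Dyck paths of semilength $n$ (lattice paths from $(0,0)$ to $(2n,0)$ with steps $U=(1,1)$, $D=(1,-1)$, never going below the $x$-axis). For $\sigma=x_1x_2\cdots x_n$: $x_i$ is a left-to-right (LTR) minimum if $x_i<x_j$ for all $j<i$; $x_i$ is a right-to-left (RTL) maximum if $x_i>x_j$ for all $j>i$. The map $\lambda$: write $\sigma=m_1w_1m_2w_2\cdots m_kw_k$ where $m_1>m_2>\dots>m_k=1$ are the LTR minima of $\sigma$ and $w_i$ are (possibly empty) words, $l_i=|w_i|$; set $m_0=n+1$; then $\lambda(\sigma)=U^{m_0-m_1}D^{l_1+1}U^{m_1-m_2}D^{l_2+1}\cdots U^{m_{k-1}-m_k}D^{l_k+1}$. The map $\mu$: write $\sigma=u_hM_hu_{h-1}M_{h-1}\cdots u_1M_1$ where $M_1<M_2<\dots<M_h=n$ are the RTL maxima of $\sigma$ and $u_i$ are (possibly empty) words; set $M_0=0$; then $\mu(\sigma)=U^{M_1-M_0}D^{|u_1|+1}U^{M_2-M_1}D^{|u_2|+1}\cdots U^{M_h-M_{h-1}}D^{|u_h|+1}$.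 (Equivalently, the ascent code of $\mu(\sigma)$ is $M_1,\dots,M_{h-1}$ and its descent code is $n-P_2,\dots,n-P_h$, where $P_i$ is the position of $M_i$.) *)

theory Defs
  imports "HOL-Combinatorics.Combinatorics"
begin

datatype step = U | D

definition avoids1234 :: "nat list \<Rightarrow> bool" where
  "avoids1234 xs \<longleftrightarrow> \<not> (\<exists>i1 i2 i3 i4. i1 < i2 \<and> i2 < i3 \<and> i3 < i4 \<and> i4 < length xs \<and>
      xs ! i1 < xs ! i2 \<and> xs ! i2 < xs ! i3 \<and> xs ! i3 < xs ! i4)"

definition Av1234 :: "nat \<Rightarrow> nat list set" where
  "Av1234 n = {xs \<in> permutations_of_set {1..n}. avoids1234 xs}"

text \<open>Dyck paths of semilength n (U = (1,1), D = (1,-1)).\<close>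
definition height :: "step list \<Rightarrow> int" where
  "height w = int (length (filter (\<lambda>s. s = U) w)) - int (length (filter (\<lambda>s. s = D) w))"

definition dyck :: "nat \<Rightarrow> step list set" where
  "dyck n = {w. length w = 2 * n \<and> height w = 0 \<and> (\<forall>k \<le> length w. height (take k w) \<ge> 0)}"

text \<open>Started with c = n+1 this yields exactly
  U^(m0-m1) D^(l1+1) ... U^(m(k-1)-mk) D^(lk+1).\<close>
fun lam_aux :: "nat \<Rightarrow> nat list \<Rightarrow> step list" where
  "lam_aux c [] = []"
| "lam_aux c (x # xs) =
     (if x < c then replicate (c - x) U @ D # lam_aux x xs else D # lam_aux c xs)"

definition lam :: "nat \<Rightarrow> nat list \<Rightarrow> step list" where
  "lam n \<sigma> = lam_aux (n + 1) \<sigma>"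

text \<open>Scan of the reversed word with current right-to-left maximum c (start M0 = 0):
  rev \<sigma> = M1 rev(u1) M2 rev(u2) ... Mh rev(uh), giving
  U^(M1-M0) D^(|u1|+1) ... U^(Mh-M(h-1)) D^(|uh|+1).\<close>
fun mu_aux :: "nat \<Rightarrow> nat list \<Rightarrow> step list" where
  "mu_aux c [] = []"
| "mu_aux c (x # xs) =
     (if c < x then replicate (x - c) U @ D # mu_aux x xs else D # mu_aux c xs)"

definition mu :: "nat list \<Rightarrow> step list" where
  "mu \<sigma> = mu_aux 0 (rev \<sigma>)"

definition nu :: "nat \<Rightarrow> nat list \<Rightarrow> step list \<times> step list" where
  "nu n \<sigma> = (lam n \<sigma>, mu \<sigma>)"

end

theory Submission
  imports Defs
begin

lemma rep_eq: "replicate m U @ D # A = replicate k U @ D # B \<Longrightarrow> m = k \<and> A = B"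
proof (induction m arbitrary: k)
  case 0 then show ?case by (cases k) auto
next
  case (Suc m) then show ?case by (cases k) auto
qed

lemma allSuc: "(\<forall>j<Suc i. P j) = (P 0 \<and> (\<forall>j<i. P (Suc j)))"
  by (metis less_Suc_eq_0_disj not_less_eq zero_less_Suc)

definition LP :: "nat \<Rightarrow> nat list \<Rightarrow> nat \<Rightarrow> bool" where
  "LP c xs i \<longleftrightarrow> xs!i < c \<and> (\<forall>j<i. xs!i < xs!j)"

definition RP :: "nat \<Rightarrow> nat list \<Rightarrow> nat \<Rightarrow> bool" where
  "RP c xs i \<longleftrightarrow> c < xs!i \<and> (\<forall>j<i. xs!j < xs!i)"

lemma LP0: "LP c (x#xs) 0 = (x < c)" by (simp add: LP_def)
lemma LPS: "LP c (x#xs) (Suc i) = LP (min c x) xs i"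
  unfolding LP_def by (simp add: allSuc)
lemma RP0: "RP c (x#xs) 0 = (c < x)" by (simp add: RP_def)
lemma RPS: "RP c (x#xs) (Suc i) = RP (max c x) xs i"
  unfolding RP_def by (simp add: allSuc)

lemma lam_aux_min: "lam_aux c (x#xs) = (if x < c then replicate (c-x) U @ D # lam_aux (min c x) xs
   else D # lam_aux (min c x) xs)" by (simp add: min_def)

lemma mu_aux_max: "mu_aux c (x#xs) = (if c < x then replicate (x-c) U @ D # mu_aux (max c x) xs
   else D # mu_aux (max c x) xs)" by (simp add: max_def)

lemma lam_aux_eq: "lam_aux c xs = lam_aux c ys \<Longrightarrow> length xs = length ys \<and>
   (\<forall>i<length xs. (LP c xs i \<longleftrightarrow> LP c ys i) \<and> (LP c xs i \<longrightarrow> xs!i = ys!i))"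
proof (induction xs arbitrary: c ys)
  case Nil then show ?case by (cases ys) (auto split: if_splits)
next
  case (Cons x xs)
  then obtain y ys' where ys: "ys = y # ys'" by (cases ys) (auto split: if_splits)
  have e: "lam_aux c (x#xs) = lam_aux c (y#ys')" using Cons.prems ys by simp
  have xy: "(x < c) = (y < c)"
  proof
    assume "x < c" then show "y < c" using e by (cases "c - x") (auto split: if_splits)
  next
    assume "y < c" then show "x < c" using e by (cases "c - y") (auto split: if_splits)
  qed
  have "(x < c \<longrightarrow> x = y) \<and> lam_aux (min c x) xs = lam_aux (min c y) ys'"
  proof (cases "x < c")
    case True
    then have "replicate (c-x) U @ D # lam_aux (min c x) xs = replicate (c-y) U @ D # lam_aux (min c y) ys'"
      using e xy by (simp only: lam_aux_min if_True)
    from rep_eq[OF this] True xy show ?thesis by auto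
  next
    case False
    then show ?thesis using e xy by (simp only: lam_aux_min if_False) simp
  qed
  then have h: "x < c \<longrightarrow> x = y" and e2: "lam_aux (min c x) xs = lam_aux (min c x) ys'"
    using xy by (auto simp: min_def)
  note IH = Cons.IH[OF e2]
  have L: "length (x # xs) = length ys" using IH ys by simp
  show ?case
  proof (intro conjI[OF L] allI impI)
    fix i assume i: "i < length (x#xs)"
    show "(LP c (x # xs) i \<longleftrightarrow> LP c ys i) \<and> (LP c (x # xs) i \<longrightarrow> (x # xs) ! i = ys ! i)"
    proof (cases i)
      case 0 then show ?thesis using xy h ys by (simp add: LP0)
    next
      case (Suc k)
      then have "k < length xs" using i by simp
      then show ?thesis using IH Suc ys h xy by (auto simp: LPS min_def)
    qed
  qed
qed

lemma mu_aux_eq: "mu_aux c xs = mu_aux c ys \<Longrightarrow> length xs = length ys \<and>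
   (\<forall>i<length xs. (RP c xs i \<longleftrightarrow> RP c ys i) \<and> (RP c xs i \<longrightarrow> xs!i = ys!i))"
proof (induction xs arbitrary: c ys)
  case Nil then show ?case by (cases ys) (auto split: if_splits)
next
  case (Cons x xs)
  then obtain y ys' where ys: "ys = y # ys'" by (cases ys) (auto split: if_splits)
  have e: "mu_aux c (x#xs) = mu_aux c (y#ys')" using Cons.prems ys by simp
  have xy: "(c < x) = (c < y)"
  proof
    assume "c < x" then show "c < y" using e by (cases "x - c") (auto split: if_splits)
  next
    assume "c < y" then show "c < x" using e by (cases "y - c") (auto split: if_splits)
  qed
  have "(c < x \<longrightarrow> x = y) \<and> mu_aux (max c x) xs = mu_aux (max c y) ys'"
  proof (cases "c < x")
    case True
    then have "replicate (x-c) U @ D # mu_aux (max c x) xs = replicate (y-c) U @ D # mu_aux (max c y) ys'"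
      using e xy by (simp only: mu_aux_max if_True)
    from rep_eq[OF this] True xy show ?thesis by auto
  next
    case False
    then show ?thesis using e xy by (simp only: mu_aux_max if_False) simp
  qed
  then have h: "c < x \<longrightarrow> x = y" and e2: "mu_aux (max c x) xs = mu_aux (max c x) ys'"
    using xy by (auto simp: max_def)
  note IH = Cons.IH[OF e2]
  have L: "length (x # xs) = length ys" using IH ys by simp
  show ?case
  proof (intro conjI[OF L] allI impI)
    fix i assume i: "i < length (x#xs)"
    show "(RP c (x # xs) i \<longleftrightarrow> RP c ys i) \<and> (RP c (x # xs) i \<longrightarrow> (x # xs) ! i = ys ! i)"
    proof (cases i)
      case 0 then show ?thesis using xy h ys by (simp add: RP0)
    next
      case (Suc k)
      then have "k < length xs" using i by simp
      then show ?thesis using IH Suc ys h xy by (auto simp: RPS max_def)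
    qed
  qed
qed

definition LL :: "nat list \<Rightarrow> nat \<Rightarrow> bool" where
  "LL xs p \<longleftrightarrow> (\<forall>j<p. xs!p < xs!j)"
definition RR :: "nat list \<Rightarrow> nat \<Rightarrow> bool" where
  "RR xs p \<longleftrightarrow> (\<forall>j. p<j \<and> j<length xs \<longrightarrow> xs!j < xs!p)"

lemma LP_LL: "p < length xs \<Longrightarrow> xs!p < c \<Longrightarrow> LP c xs p = LL xs p"
  by (simp add: LP_def LL_def)

lemma RP_RR: assumes p: "p < length xs" and pos: "0 < xs!p"
  shows "RP 0 (rev xs) (length xs - 1 - p) = RR xs p"
proof -
  let ?l = "length xs"
  have a: "rev xs ! (?l - 1 - p) = xs ! p" using p by (simp add: rev_nth Suc_diff_Suc)
  have "(\<forall>j<?l - 1 - p. rev xs ! j < xs!p) = RR xs p"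
  proof
    assume h: "\<forall>j<?l - 1 - p. rev xs ! j < xs!p"
    show "RR xs p" unfolding RR_def
    proof (intro allI impI)
      fix k assume k: "p < k \<and> k < ?l"
      then have "?l - Suc k < ?l - 1 - p" by auto
      with h have "rev xs ! (?l - Suc k) < xs!p" by blast
      moreover have "rev xs ! (?l - Suc k) = xs ! k"
      proof -
        have "?l - Suc (?l - Suc k) = k" using k by arith
        moreover have "?l - Suc k < ?l" using k by arith
        ultimately show ?thesis by (simp add: rev_nth)
      qed
      ultimately show "xs!k < xs!p" by simp
    qed
  next
    assume h: "RR xs p"
    show "\<forall>j<?l - 1 - p. rev xs ! j < xs!p"
    proof (intro allI impI)
      fix j assume j: "j < ?l - 1 - p"
      then have "rev xs ! j = xs ! (?l - Suc j)" by (simp add: rev_nth)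
      moreover have "p < ?l - Suc j \<and> ?l - Suc j < ?l" using j by auto
      ultimately show "rev xs ! j < xs!p" using h unfolding RR_def by auto
    qed
  qed
  then show ?thesis unfolding RP_def a using pos by simp
qed

lemma mid: assumes d: "distinct xs" and av: "avoids1234 xs" and pq: "p < q" "q < length xs"
  and nl: "\<not> LL xs p" and nr: "\<not> RR xs q"
  shows "\<not> xs!p < xs!q"
proof
  assume pq2: "xs!p < xs!q"
  from nl obtain j where j: "j < p" "\<not> xs!p < xs!j" unfolding LL_def by auto
  have "xs!j \<noteq> xs!p" using j pq d by (simp add: nth_eq_iff_index_eq)
  with j have j2: "xs!j < xs!p" by simp
  from nr obtain k where k: "q < k" "k < length xs" "\<not> xs!k < xs!q" unfolding RR_def by auto
  have "xs!k \<noteq> xs!q" using k pq d by (simp add: nth_eq_iff_index_eq)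
  with k have k2: "xs!q < xs!k" by simp
  show False using av j(1) pq k j2 pq2 k2 unfolding avoids1234_def by blast
qed

lemma key:
  assumes s: "distinct s" "set s = set t" "length s = n"
    and t: "distinct t" "avoids1234 t" "length t = n"
    and agree: "\<forall>p<n. ((LL s p \<or> RR s p) \<longleftrightarrow> (LL t p \<or> RR t p)) \<and> ((LL s p \<or> RR s p) \<longrightarrow> s!p = t!p)"
    and p: "p < n" "\<forall>q<p. s!q = t!q" and gt: "t!p < s!p"
  shows False
proof -
  have "s!p \<in> set t" using s p by (metis nth_mem)
  then obtain q where q: "q < n" "t!q = s!p" using t by (metis in_set_conv_nth)
  have "q \<noteq> p" using q gt by auto
  have "\<not> q < p"
  proof
    assume "q < p" then have "s!q = s!p" using p q by simp
    moreover have "q < length s" "p < length s" using \<open>q < p\<close> p s by auto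
    ultimately show False using nth_eq_iff_index_eq[of s q p] s(1) \<open>q < p\<close> by auto
  qed
  with \<open>q \<noteq> p\<close> have pq: "p < q" by simp
  have np: "\<not> (LL t p \<or> RR t p)" using agree p gt by force
  have nq: "\<not> (LL t q \<or> RR t q)"
  proof
    assume "LL t q \<or> RR t q"
    then have "s!q = t!q" using agree q by blast
    then have "s!q = s!p" using q by simp
    then show False using s pq q p by (simp add: nth_eq_iff_index_eq)
  qed
  have "\<not> t!p < t!q" using mid[OF t(1,2) pq] q t np nq by simp
  then show False using gt q by simp
qed

lemma perm_facts: "xs \<in> Av1234 n \<Longrightarrow> distinct xs \<and> set xs = {1..n} \<and> length xs = n \<and> avoids1234 xs"
  unfolding Av1234_def permutations_of_set_def by (auto simp: distinct_card[symmetric])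

lemma agree_lemma:
  assumes s: "s \<in> Av1234 n" and t: "t \<in> Av1234 n" and e: "nu n s = nu n t" and p: "p < n"
  shows "((LL s p \<or> RR s p) \<longleftrightarrow> (LL t p \<or> RR t p)) \<and> ((LL s p \<or> RR s p) \<longrightarrow> s!p = t!p)"
proof -
  have fs: "distinct s" "set s = {1..n}" "length s = n" using perm_facts[OF s] by auto
  have ft: "distinct t" "set t = {1..n}" "length t = n" using perm_facts[OF t] by auto
  have sp: "s!p \<in> {1..n}" using fs p by (metis nth_mem)
  have tp: "t!p \<in> {1..n}" using ft p by (metis nth_mem)
  have el: "lam_aux (n+1) s = lam_aux (n+1) t" and em: "mu_aux 0 (rev s) = mu_aux 0 (rev t)"
    using e by (auto simp: nu_def lam_def mu_def)
  have A: "(LP (n+1) s p \<longleftrightarrow> LP (n+1) t p) \<and> (LP (n+1) s p \<longrightarrow> s!p = t!p)"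
    using lam_aux_eq[OF el] p fs by auto
  have A': "(LL s p \<longleftrightarrow> LL t p) \<and> (LL s p \<longrightarrow> s!p = t!p)"
    using A LP_LL[of p s "n+1"] LP_LL[of p t "n+1"] sp tp p fs ft by auto
  have i: "n - 1 - p < length (rev s)" using p fs by simp
  have B: "(RP 0 (rev s) (n-1-p) \<longleftrightarrow> RP 0 (rev t) (n-1-p)) \<and> (RP 0 (rev s) (n-1-p) \<longrightarrow> rev s!(n-1-p) = rev t!(n-1-p))"
    using mu_aux_eq[OF em] i by blast
  have r1: "RP 0 (rev s) (n-1-p) = RR s p" using RP_RR[of p s] sp p fs by auto
  have r2: "RP 0 (rev t) (n-1-p) = RR t p" using RP_RR[of p t] tp p ft by auto
  have r3: "rev s!(n-1-p) = s!p" "rev t!(n-1-p) = t!p" using p fs ft by (auto simp: rev_nth Suc_diff_Suc)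
  have B': "(RR s p \<longleftrightarrow> RR t p) \<and> (RR s p \<longrightarrow> s!p = t!p)" using B r1 r2 r3 by simp
  show ?thesis using A' B' by blast
qed

theorem mainTheorem1:
  fixes n :: nat
  assumes "n \<ge> 1"
  shows "inj_on (nu n) (Av1234 n)"
proof (rule inj_onI)
  fix s t assume s: "s \<in> Av1234 n" and t: "t \<in> Av1234 n" and e: "nu n s = nu n t"
  have fs: "distinct s" "set s = {1..n}" "length s = n" "avoids1234 s" using perm_facts[OF s] by auto
  have ft: "distinct t" "set t = {1..n}" "length t = n" "avoids1234 t" using perm_facts[OF t] by auto
  have ag: "\<forall>p<n. ((LL s p \<or> RR s p) \<longleftrightarrow> (LL t p \<or> RR t p)) \<and> ((LL s p \<or> RR s p) \<longrightarrow> s!p = t!p)"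
    using agree_lemma[OF s t e] by blast
  have ag': "\<forall>p<n. ((LL t p \<or> RR t p) \<longleftrightarrow> (LL s p \<or> RR s p)) \<and> ((LL t p \<or> RR t p) \<longrightarrow> t!p = s!p)"
    using ag by metis
  show "s = t"
  proof (rule ccontr)
    assume "s \<noteq> t"
    then have ex: "\<exists>p. p < n \<and> s!p \<noteq> t!p" using fs ft by (metis nth_equalityI)
    define p where "p = (LEAST p. p < n \<and> s!p \<noteq> t!p)"
    have p1: "p < n \<and> s!p \<noteq> t!p" unfolding p_def using LeastI_ex[OF ex] .
    have p2: "\<forall>q<p. s!q = t!q"
    proof (intro allI impI)
      fix q assume "q < p"
      then have "\<not> (q < n \<and> s!q \<noteq> t!q)" unfolding p_def by (rule not_less_Least)
      then show "s!q = t!q" using \<open>q < p\<close> p1 by auto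
    qed
    show False
    proof (cases "t!p < s!p")
      case True
      show False using key[OF fs(1) _ fs(3) ft(1,4,3) ag _ p2 True] p1 fs ft by auto
    next
      case False
      then have lt: "s!p < t!p" using p1 by auto
      show False using key[OF ft(1) _ ft(3) fs(1,4,3) ag' _ _ lt] p1 p2 fs ft by auto
    qed
  qed
qed

end
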